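(* Let $\alpha,\beta,\gamma\in\mathbb{R}$, $s_1,s_2\in S_X$, $p_0\in[0,1]$ and $\phi>0$, and write $f_i(y):=\alpha u_X(s_i,y)+\beta u_Y(s_i,y)+\gamma$. Suppose that for every $y\in S_Y$, $$-\frac{1-(1-\lambda)p_0}{\phi}\le f_1(y)\le-\frac{(1-\lambda)(1-p_0)}{\phi},\qquad \frac{(1-\lambda)p_0}{\phi}\le f_2(y)\le\frac{\lambda+(1-\lambda)p_0}{\phi}.$$ Define $p(s_1,y):=\frac{1}{\lambda}\big(\phi f_1(y)-(1-\lambda)p_0+1\big)$ and $p(s_2,y):=\frac{1}{\lambda}\big(\phi f_2(y)-(1-\lambda)p_0\big)$ (these lie in $[0,1]$), and let player $X$ use the memory-one strategy with initial action $\sigma_X^0=p_0\delta_{s_1}+(1-p_0)\delta_{s_2}$ and $\sigma_X[x,y]=p(x,y)\delta_{s_1}+(1-p(x,y))\delta_{s_2}$ for $x\in\{s_1,s_2\}$, $y\in S_Y$ (so $X$ only ever plays $s_1$ or $s_2$). Then for every behavioral strategy of $Y$, $\alpha\pi_X+\beta\pi_Y+\gamma=0$.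
   Context: Standing framework. Let $S_X,S_Y$ be measurable spaces (action spaces of players $X$ and $Y$), $u_X,u_Y:S_X\times S_Y\to\mathbb{R}$ bounded measurable payoff functions, and $\lambda\in(0,1)$ a discount factor. Histories: $\mathcal{H}^T=(S_X\times S_Y)^T$, $\mathcal{H}^0=\{\varnothing\}$, $\mathcal{H}=\bigsqcup_T\mathcal{H}^T$. A behavioral strategy for a player is a Markov kernel from $\mathcal{H}$ to that player's action space. A memory-one strategy for $X$ is given by an initial probability measure $\sigma_X^0$ on $S_X$ and a Markov kernel $(x,y)\mapsto\sigma_X[x,y]$ from $S_X\times S_Y$ to $S_X$, applied to the last action pair. Given strategies, let $\mu_0=\sigma_X[\varnothing]\otimes\sigma_Y[\varnothing]$ and $\mu_t(E'\times E)=\int_{E'}(\sigma_X[h]\otimes\sigma_Y[h])(E)\,d\mu_{t-1}(h)$ on $\mathcal{H}^{t+1}$; let $\nu_t(E)=\mu_t(\mathcal{H}^t\times E)$. Expected payoffs: $\pi_X=(1-\lambda)\sum_{t\ge0}\lambda^t\int u_X\,d\nu_t$, $\pi_Y=(1-\lambda)\sum_{t\ge0}\lambda^t\int u_Y\,d\nu_t$. $\delta_s$ denotes the Dirac measure at $s$. *)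

theory Defs
  imports "HOL-Probability.Probability"
begin

definition hist_space :: "'x measure \<Rightarrow> 'y measure \<Rightarrow> nat \<Rightarrow> (nat \<Rightarrow> 'x \<times> 'y) measure" where
  "hist_space SX SY T = PiM {..<T} (\<lambda>_. SX \<Otimes>\<^sub>M SY)"

text \<open>A behavioral strategy (Markov kernel from the disjoint union of all H^T to the
  action space A), given as a family of kernels indexed by the history length T.\<close>
definition behavioral_strategy ::
  "'x measure \<Rightarrow> 'y measure \<Rightarrow> 'a measure \<Rightarrow> (nat \<Rightarrow> (nat \<Rightarrow> 'x \<times> 'y) \<Rightarrow> 'a measure) \<Rightarrow> bool" where
  "behavioral_strategy SX SY A \<sigma> \<longleftrightarrow> (\<forall>T. \<sigma> T \<in> hist_space SX SY T \<rightarrow>\<^sub>M prob_algebra A)"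

definition memory_one :: "'x measure \<Rightarrow> ('x \<times> 'y \<Rightarrow> 'x measure) \<Rightarrow> nat \<Rightarrow> (nat \<Rightarrow> 'x \<times> 'y) \<Rightarrow> 'x measure" where
  "memory_one \<sigma>0 K T h = (if T = 0 then \<sigma>0 else K (h (T - 1)))"

definition two_point :: "'a measure \<Rightarrow> real \<Rightarrow> 'a \<Rightarrow> 'a \<Rightarrow> 'a measure" where
  "two_point S p a b = measure_of (space S) (sets S)
     (\<lambda>A. ennreal (p * indicator A a + (1 - p) * indicator A b))"

text \<open>hist_dist t is the distribution of the history of length t; hist_dist (Suc t) = mu_t.\<close>
primrec hist_dist ::
  "'x measure \<Rightarrow> 'y measure \<Rightarrow> (nat \<Rightarrow> (nat \<Rightarrow> 'x \<times> 'y) \<Rightarrow> 'x measure)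
   \<Rightarrow> (nat \<Rightarrow> (nat \<Rightarrow> 'x \<times> 'y) \<Rightarrow> 'y measure) \<Rightarrow> nat \<Rightarrow> (nat \<Rightarrow> 'x \<times> 'y) measure" where
  "hist_dist SX SY \<sigma>X \<sigma>Y 0 = return (hist_space SX SY 0) (\<lambda>_. undefined)"
| "hist_dist SX SY \<sigma>X \<sigma>Y (Suc t) =
     bind (hist_dist SX SY \<sigma>X \<sigma>Y t)
       (\<lambda>h. distr (\<sigma>X t h \<Otimes>\<^sub>M \<sigma>Y t h) (hist_space SX SY (Suc t)) (\<lambda>a. h(t := a)))"

definition round_dist ::
  "'x measure \<Rightarrow> 'y measure \<Rightarrow> (nat \<Rightarrow> (nat \<Rightarrow> 'x \<times> 'y) \<Rightarrow> 'x measure)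
   \<Rightarrow> (nat \<Rightarrow> (nat \<Rightarrow> 'x \<times> 'y) \<Rightarrow> 'y measure) \<Rightarrow> nat \<Rightarrow> ('x \<times> 'y) measure" where
  "round_dist SX SY \<sigma>X \<sigma>Y t = distr (hist_dist SX SY \<sigma>X \<sigma>Y (Suc t)) (SX \<Otimes>\<^sub>M SY) (\<lambda>h. h t)"

definition expected_payoff ::
  "'x measure \<Rightarrow> 'y measure \<Rightarrow> (nat \<Rightarrow> (nat \<Rightarrow> 'x \<times> 'y) \<Rightarrow> 'x measure)
   \<Rightarrow> (nat \<Rightarrow> (nat \<Rightarrow> 'x \<times> 'y) \<Rightarrow> 'y measure) \<Rightarrow> real \<Rightarrow> ('x \<Rightarrow> 'y \<Rightarrow> real) \<Rightarrow> real" where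
  "expected_payoff SX SY \<sigma>X \<sigma>Y lam u =
     (1 - lam) * (\<Sum>t. lam ^ t * (\<integral>z. case_prod u z \<partial>(round_dist SX SY \<sigma>X \<sigma>Y t)))"

definition bounded_measurable_payoff :: "'x measure \<Rightarrow> 'y measure \<Rightarrow> ('x \<Rightarrow> 'y \<Rightarrow> real) \<Rightarrow> bool" where
  "bounded_measurable_payoff SX SY u \<longleftrightarrow>
     case_prod u \<in> borel_measurable (SX \<Otimes>\<^sub>M SY) \<and>
     (\<exists>B. \<forall>x\<in>space SX. \<forall>y\<in>space SY. \<bar>u x y\<bar> \<le> B)"

end

theory Submission imports Defs begin

lemma two_point_sets[simp]: "sets (two_point S p a b) = sets S"
  unfolding two_point_def by (simp add: sets.space_closed sets.sigma_sets_eq)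

lemma two_point_space[simp]: "space (two_point S p a b) = space S"
  by (rule sets_eq_imp_space_eq) simp

lemma two_point_emeasure:
  assumes p: "0 \<le> p" "p \<le> 1" and A: "A \<in> sets S"
  shows "emeasure (two_point S p a b) A = ennreal (p * indicator A a + (1 - p) * indicator A b)"
proof -
  have eq: "\<And>A. ennreal (p * indicator A a + (1 - p) * indicator A b)
     = ennreal p * indicator A a + ennreal (1 - p) * indicator A b"
    using p by (auto simp: indicator_def)
  have ca: "countably_additive (sets S) (\<lambda>A. ennreal (p * indicator A a + (1 - p) * indicator A b))"
  proof (rule countably_additiveI)
    fix F :: "nat \<Rightarrow> _" assume "range F \<subseteq> sets S" "disjoint_family F" "\<Union> (range F) \<in> sets S"
    then show "(\<Sum>i. ennreal (p * indicator (F i) a + (1 - p) * indicator (F i) b))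
       = ennreal (p * indicator (\<Union> (range F)) a + (1 - p) * indicator (\<Union> (range F)) b)"
      unfolding eq by (simp add: suminf_add[symmetric] ennreal_suminf_cmult suminf_indicator)
  qed
  show ?thesis unfolding two_point_def
    by (rule emeasure_measure_of_sigma[OF sets.sigma_algebra_axioms _ ca A])
       (simp add: positive_def)
qed

lemma two_point_prob:
  assumes p: "0 \<le> p" "p \<le> 1" and ab: "a \<in> space S" "b \<in> space S"
  shows "two_point S p a b \<in> space (prob_algebra S)"
proof -
  have "emeasure (two_point S p a b) (space (two_point S p a b)) = 1"
    using two_point_emeasure[OF p sets.top[of S], of a b] ab by simp
  then show ?thesis by (auto simp: space_prob_algebra intro!: prob_spaceI)
qed

lemma two_point_measure:
  assumes p: "0 \<le> p" "p \<le> 1" and A: "A \<in> sets S"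
  shows "measure (two_point S p a b) A = p * indicator A a + (1 - p) * indicator A b"
proof -
  have "0 \<le> p * indicator A a + (1 - p) * indicator A b" using p by (simp add: indicator_def)
  then show ?thesis using two_point_emeasure[OF assms] unfolding measure_def by simp
qed

lemma hist_space_Suc: "hist_space SX SY (Suc t) = PiM (insert t {..<t}) (\<lambda>_. SX \<Otimes>\<^sub>M SY)"
  unfolding hist_space_def by (simp add: lessThan_Suc)

lemma hist_upd_meas:
  "(\<lambda>(h, a). h(t := a)) \<in> hist_space SX SY t \<Otimes>\<^sub>M (SX \<Otimes>\<^sub>M SY) \<rightarrow>\<^sub>M hist_space SX SY (Suc t)"
  unfolding hist_space_Suc unfolding hist_space_def by (rule measurable_add_dim)

lemma kernel_meas:
  assumes sX: "behavioral_strategy SX SY SX \<sigma>X" and sY: "behavioral_strategy SX SY SY \<sigma>Y"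
  shows "(\<lambda>h. distr (\<sigma>X t h \<Otimes>\<^sub>M \<sigma>Y t h) (hist_space SX SY (Suc t)) (\<lambda>a. h(t := a)))
     \<in> hist_space SX SY t \<rightarrow>\<^sub>M prob_algebra (hist_space SX SY (Suc t))"
proof (rule measurable_distr_prob_space2)
  show "(\<lambda>h. \<sigma>X t h \<Otimes>\<^sub>M \<sigma>Y t h) \<in> hist_space SX SY t \<rightarrow>\<^sub>M prob_algebra (SX \<Otimes>\<^sub>M SY)"
    using sX sY unfolding behavioral_strategy_def by (intro measurable_pair_prob) auto
  show "(\<lambda>(x, y). x(t := y)) \<in> hist_space SX SY t \<Otimes>\<^sub>M (SX \<Otimes>\<^sub>M SY) \<rightarrow>\<^sub>M hist_space SX SY (Suc t)"
    by (rule hist_upd_meas)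
qed

lemma hist_prob:
  assumes sX: "behavioral_strategy SX SY SX \<sigma>X" and sY: "behavioral_strategy SX SY SY \<sigma>Y"
  shows "hist_dist SX SY \<sigma>X \<sigma>Y t \<in> space (prob_algebra (hist_space SX SY t))"
proof (induction t)
  case 0
  have "(\<lambda>_. undefined) \<in> space (hist_space SX SY 0)"
    by (simp add: hist_space_def space_PiM)
  then show ?case by (simp add: space_prob_algebra prob_space_return)
next
  case (Suc t)
  show ?case
    using prob_space_bind'[OF Suc kernel_meas[OF sX sY]] sets_bind'[OF Suc kernel_meas[OF sX sY]]
    by (simp add: space_prob_algebra)
qed

lemma round_eq:
  assumes sX: "behavioral_strategy SX SY SX \<sigma>X" and sY: "behavioral_strategy SX SY SY \<sigma>Y"
  shows "round_dist SX SY \<sigma>X \<sigma>Y t = bind (hist_dist SX SY \<sigma>X \<sigma>Y t) (\<lambda>h. \<sigma>X t h \<Otimes>\<^sub>M \<sigma>Y t h)"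
proof -
  let ?H = "hist_dist SX SY \<sigma>X \<sigma>Y t"
  let ?N = "\<lambda>h. distr (\<sigma>X t h \<Otimes>\<^sub>M \<sigma>Y t h) (hist_space SX SY (Suc t)) (\<lambda>a. h(t := a))"
  have H: "sets ?H = sets (hist_space SX SY t)" "prob_space ?H"
    using hist_prob[OF sX sY, of t] by (auto simp: space_prob_algebra)
  have N: "?N \<in> ?H \<rightarrow>\<^sub>M subprob_algebra (hist_space SX SY (Suc t))"
    using measurable_prob_algebraD[OF kernel_meas[OF sX sY, of t]]
    by (simp cong: measurable_cong_sets[OF H(1) refl])
  have ne: "space ?H \<noteq> {}" using H(2) prob_space.not_empty by blast
  have proj: "(\<lambda>h. h t) \<in> hist_space SX SY (Suc t) \<rightarrow>\<^sub>M SX \<Otimes>\<^sub>M SY"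
    unfolding hist_space_def by (rule measurable_component_singleton) simp
  have "round_dist SX SY \<sigma>X \<sigma>Y t = bind ?H (\<lambda>h. distr (?N h) (SX \<Otimes>\<^sub>M SY) (\<lambda>h. h t))"
    unfolding round_dist_def hist_dist.simps by (rule distr_bind[OF N ne proj])
  also have "\<dots> = bind ?H (\<lambda>h. \<sigma>X t h \<Otimes>\<^sub>M \<sigma>Y t h)"
  proof (rule bind_cong[OF refl])
    fix h assume h: "h \<in> space ?H"
    then have h': "h \<in> space (PiM {..<t} (\<lambda>_. SX \<Otimes>\<^sub>M SY))"
      using sets_eq_imp_space_eq[OF H(1)] by (simp add: hist_space_def)
    have sx: "\<sigma>X t h \<in> space (prob_algebra SX)" "\<sigma>Y t h \<in> space (prob_algebra SY)"
      using measurable_space[OF sX[unfolded behavioral_strategy_def, rule_format, of t]]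
        measurable_space[OF sY[unfolded behavioral_strategy_def, rule_format, of t]]
        h sets_eq_imp_space_eq[OF H(1)] by auto
    have upd: "(\<lambda>a. h(t := a)) \<in> (\<sigma>X t h \<Otimes>\<^sub>M \<sigma>Y t h) \<rightarrow>\<^sub>M hist_space SX SY (Suc t)"
    proof -
      have "(\<lambda>a. h(t := a)) \<in> SX \<Otimes>\<^sub>M SY \<rightarrow>\<^sub>M PiM (insert t {..<t}) (\<lambda>_. SX \<Otimes>\<^sub>M SY)"
        by (rule measurable_component_update[OF h']) simp
      moreover have "sets (\<sigma>X t h \<Otimes>\<^sub>M \<sigma>Y t h) = sets (SX \<Otimes>\<^sub>M SY)"
        using sx by (intro sets_pair_measure_cong) (auto simp: space_prob_algebra)
      ultimately show ?thesis unfolding hist_space_Suc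
        by (simp cong: measurable_cong_sets)
    qed
    have "distr (?N h) (SX \<Otimes>\<^sub>M SY) (\<lambda>h. h t) = distr (\<sigma>X t h \<Otimes>\<^sub>M \<sigma>Y t h) (SX \<Otimes>\<^sub>M SY) ((\<lambda>h. h t) \<circ> (\<lambda>a. h(t := a)))"
      by (rule distr_distr[OF proj upd])
    also have "\<dots> = distr (\<sigma>X t h \<Otimes>\<^sub>M \<sigma>Y t h) (SX \<Otimes>\<^sub>M SY) (\<lambda>a. a)"
      by (simp add: comp_def)
    also have "\<dots> = \<sigma>X t h \<Otimes>\<^sub>M \<sigma>Y t h"
      using sx by (intro distr_id2 sets_pair_measure_cong) (auto simp: space_prob_algebra)
    finally show "distr (?N h) (SX \<Otimes>\<^sub>M SY) (\<lambda>h. h t) = \<sigma>X t h \<Otimes>\<^sub>M \<sigma>Y t h" .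
  qed
  finally show ?thesis .
qed

lemma strat_space:
  assumes "behavioral_strategy SX SY A \<sigma>" "h \<in> space (hist_space SX SY t)"
  shows "\<sigma> t h \<in> space (prob_algebra A)"
  using measurable_space[OF assms(1)[unfolded behavioral_strategy_def, rule_format, of t]] assms(2) by auto

lemma pair_sets:
  assumes sX: "behavioral_strategy SX SY SX \<sigma>X" and sY: "behavioral_strategy SX SY SY \<sigma>Y"
    and h: "h \<in> space (hist_space SX SY t)"
  shows "sets (\<sigma>X t h \<Otimes>\<^sub>M \<sigma>Y t h) = sets (SX \<Otimes>\<^sub>M SY)"
    "space (\<sigma>X t h \<Otimes>\<^sub>M \<sigma>Y t h) = space (SX \<Otimes>\<^sub>M SY)"
    "prob_space (\<sigma>X t h)" "prob_space (\<sigma>Y t h)"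
    "sets (\<sigma>X t h) = sets SX" "sets (\<sigma>Y t h) = sets SY"
  using strat_space[OF sX h] strat_space[OF sY h]
  by (auto simp: space_prob_algebra intro!: sets_pair_measure_cong sets_eq_imp_space_eq)

lemma round_prob:
  assumes sX: "behavioral_strategy SX SY SX \<sigma>X" and sY: "behavioral_strategy SX SY SY \<sigma>Y"
  shows "round_dist SX SY \<sigma>X \<sigma>Y t \<in> space (prob_algebra (SX \<Otimes>\<^sub>M SY))"
proof -
  have k: "(\<lambda>h. \<sigma>X t h \<Otimes>\<^sub>M \<sigma>Y t h) \<in> hist_space SX SY t \<rightarrow>\<^sub>M prob_algebra (SX \<Otimes>\<^sub>M SY)"
    using sX sY unfolding behavioral_strategy_def by (intro measurable_pair_prob) auto
  show ?thesis unfolding round_eq[OF sX sY]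
    using prob_space_bind'[OF hist_prob[OF sX sY] k] sets_bind'[OF hist_prob[OF sX sY] k]
    by (simp add: space_prob_algebra)
qed

lemma round_rect_e:
  assumes sX: "behavioral_strategy SX SY SX \<sigma>X" and sY: "behavioral_strategy SX SY SY \<sigma>Y"
    and B: "B \<in> sets SX"
  shows "emeasure (round_dist SX SY \<sigma>X \<sigma>Y t) (B \<times> space SY)
     = (\<integral>\<^sup>+h. emeasure (\<sigma>X t h) B \<partial>hist_dist SX SY \<sigma>X \<sigma>Y t)"
proof -
  have k: "(\<lambda>h. \<sigma>X t h \<Otimes>\<^sub>M \<sigma>Y t h) \<in> hist_space SX SY t \<rightarrow>\<^sub>M prob_algebra (SX \<Otimes>\<^sub>M SY)"
    using sX sY unfolding behavioral_strategy_def by (intro measurable_pair_prob) auto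
  have HS: "space (hist_dist SX SY \<sigma>X \<sigma>Y t) = space (hist_space SX SY t)"
    using hist_prob[OF sX sY, of t] unfolding space_prob_algebra by (intro sets_eq_imp_space_eq) simp
  have "emeasure (round_dist SX SY \<sigma>X \<sigma>Y t) (B \<times> space SY)
     = (\<integral>\<^sup>+h. emeasure (\<sigma>X t h \<Otimes>\<^sub>M \<sigma>Y t h) (B \<times> space SY) \<partial>hist_dist SX SY \<sigma>X \<sigma>Y t)"
    unfolding round_eq[OF sX sY]
    by (rule emeasure_bind_prob_algebra[OF hist_prob[OF sX sY] k]) (simp add: B)
  also have "\<dots> = (\<integral>\<^sup>+h. emeasure (\<sigma>X t h) B \<partial>hist_dist SX SY \<sigma>X \<sigma>Y t)"
  proof (rule nn_integral_cong)
    fix h assume "h \<in> space (hist_dist SX SY \<sigma>X \<sigma>Y t)"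
    then have h: "h \<in> space (hist_space SX SY t)" using HS by simp
    note ps = pair_sets[OF sX sY h]
    interpret Y: prob_space "\<sigma>Y t h" by (rule ps(4))
    have sp: "space (\<sigma>Y t h) = space SY" using ps(6) by (rule sets_eq_imp_space_eq)
    have "emeasure (\<sigma>X t h \<Otimes>\<^sub>M \<sigma>Y t h) (B \<times> space (\<sigma>Y t h)) = emeasure (\<sigma>X t h) B * emeasure (\<sigma>Y t h) (space (\<sigma>Y t h))"
      by (rule Y.emeasure_pair_measure_Times) (use B ps in auto)
    then show "emeasure (\<sigma>X t h \<Otimes>\<^sub>M \<sigma>Y t h) (B \<times> space SY) = emeasure (\<sigma>X t h) B"
      using sp Y.emeasure_space_1 by simp
  qed
  finally show ?thesis .
qed

lemma prob1_AE:
  assumes "prob_space M" "Z \<in> sets M" "emeasure M Z = 1"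
  shows "AE x in M. x \<in> Z"
proof -
  interpret prob_space M by fact
  have "prob Z = 1" using assms(3) by (simp add: measure_def)
  then show ?thesis by (rule AE_prob_1)
qed

lemma pair_full:
  assumes r: "0 \<le> r" "r \<le> 1" and s: "s1 \<in> space SX" "s2 \<in> space SX"
    and N: "prob_space N" "sets N = sets SY"
    and C: "C \<in> sets (SX \<Otimes>\<^sub>M SY)" "{s1, s2} \<times> space SY \<subseteq> C"
  shows "emeasure (two_point SX r s1 s2 \<Otimes>\<^sub>M N) C = 1"
proof -
  let ?M = "two_point SX r s1 s2"
  interpret N: prob_space N by fact
  have spN: "space N = space SY" using N(2) by (rule sets_eq_imp_space_eq)
  have setsMN: "sets (?M \<Otimes>\<^sub>M N) = sets (SX \<Otimes>\<^sub>M SY)"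
    using N(2) by (intro sets_pair_measure_cong) auto
  have C': "C \<in> sets (?M \<Otimes>\<^sub>M N)" using C setsMN by simp
  have Csub: "C \<subseteq> space SX \<times> space SY" using sets.sets_into_space[OF C(1)] by (simp add: space_pair_measure)
  have eq: "emeasure (?M \<Otimes>\<^sub>M N) C = (\<integral>\<^sup>+x. emeasure N (Pair x -` C) \<partial>?M)"
    by (rule N.emeasure_pair_measure_alt[OF C'])
  let ?Z = "{x \<in> space ?M. emeasure N (Pair x -` C) = 1}"
  have meas: "(\<lambda>x. emeasure N (Pair x -` C)) \<in> borel_measurable ?M"
    by (rule N.measurable_emeasure_Pair[OF C'])
  have Z: "?Z \<in> sets ?M" using meas by measurable
  have sZ: "s1 \<in> ?Z" "s2 \<in> ?Z"
  proof -
    have "\<And>s. s \<in> {s1, s2} \<Longrightarrow> Pair s -` C = space N"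
      using C(2) Csub spN by auto
    then show "s1 \<in> ?Z" "s2 \<in> ?Z" using s N.emeasure_space_1 by auto
  qed
  have "emeasure ?M ?Z = ennreal (r * indicator ?Z s1 + (1 - r) * indicator ?Z s2)"
    using Z by (intro two_point_emeasure r) simp
  also have "\<dots> = 1" using sZ by simp
  finally have "emeasure ?M ?Z = 1" .
  moreover have "prob_space ?M" using two_point_prob[OF r s] by (simp add: space_prob_algebra)
  ultimately have ae: "AE x in ?M. x \<in> ?Z" using Z by (intro prob1_AE) auto
  have "(\<integral>\<^sup>+x. emeasure N (Pair x -` C) \<partial>?M) = (\<integral>\<^sup>+x. 1 \<partial>?M)"
    by (rule nn_integral_cong_AE) (use ae in auto)
  also have "\<dots> = 1" using prob_space.emeasure_space_1[OF \<open>prob_space ?M\<close>] by simp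
  finally show ?thesis using eq by simp
qed

lemma upd_meas1:
  assumes h: "h \<in> space (hist_space SX SY t)"
  shows "(\<lambda>a. h(t := a)) \<in> SX \<Otimes>\<^sub>M SY \<rightarrow>\<^sub>M hist_space SX SY (Suc t)"
  unfolding hist_space_Suc
  by (rule measurable_component_update) (use h in \<open>auto simp: hist_space_def\<close>)

lemma hist_sets:
  assumes sX: "behavioral_strategy SX SY SX \<sigma>X" and sY: "behavioral_strategy SX SY SY \<sigma>Y"
  shows "sets (hist_dist SX SY \<sigma>X \<sigma>Y t) = sets (hist_space SX SY t)"
    "space (hist_dist SX SY \<sigma>X \<sigma>Y t) = space (hist_space SX SY t)"
    "prob_space (hist_dist SX SY \<sigma>X \<sigma>Y t)"
proof -
  have *: "sets (hist_dist SX SY \<sigma>X \<sigma>Y t) = sets (hist_space SX SY t) \<and> prob_space (hist_dist SX SY \<sigma>X \<sigma>Y t)"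
    using hist_prob[OF sX sY, of t] unfolding space_prob_algebra by simp
  then show "sets (hist_dist SX SY \<sigma>X \<sigma>Y t) = sets (hist_space SX SY t)"
    "prob_space (hist_dist SX SY \<sigma>X \<sigma>Y t)" by auto
  show "space (hist_dist SX SY \<sigma>X \<sigma>Y t) = space (hist_space SX SY t)"
    using * by (intro sets_eq_imp_space_eq) simp
qed

lemma TP_P':
  assumes sX: "behavioral_strategy SX SY SX \<sigma>X" and sY: "behavioral_strategy SX SY SY \<sigma>Y"
    and s: "s1 \<in> space SX" "s2 \<in> space SX"
    and TP: "\<forall>G\<in>sets (hist_space SX SY t). {h\<in>space (hist_space SX SY t). \<exists>r. 0 \<le> r \<and> r \<le> 1 \<and> \<sigma>X t h = two_point SX r s1 s2} \<subseteq> G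
               \<longrightarrow> emeasure (hist_dist SX SY \<sigma>X \<sigma>Y t) G = 1"
    and E: "E \<in> sets (hist_space SX SY (Suc t))"
      "{h\<in>space (hist_space SX SY (Suc t)). fst (h t) \<in> {s1, s2}} \<subseteq> E"
  shows "emeasure (hist_dist SX SY \<sigma>X \<sigma>Y (Suc t)) E = 1"
proof -
  let ?H = "hist_dist SX SY \<sigma>X \<sigma>Y t"
  let ?N = "\<lambda>h. distr (\<sigma>X t h \<Otimes>\<^sub>M \<sigma>Y t h) (hist_space SX SY (Suc t)) (\<lambda>a. h(t := a))"
  note HS = hist_sets[OF sX sY, of t]
  note km = kernel_meas[OF sX sY, of t]
  have eq1: "emeasure (hist_dist SX SY \<sigma>X \<sigma>Y (Suc t)) E = (\<integral>\<^sup>+h. emeasure (?N h) E \<partial>?H)"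
    unfolding hist_dist.simps by (rule emeasure_bind_prob_algebra[OF hist_prob[OF sX sY] km E(1)])
  let ?G = "{h\<in>space (hist_space SX SY t). emeasure (?N h) E = 1}"
  have Fm: "(\<lambda>h. emeasure (?N h) E) \<in> borel_measurable (hist_space SX SY t)"
    using measurable_compose[OF measurable_prob_algebraD[OF km] measurable_emeasure_subprob_algebra[OF E(1)]] .
  have G: "?G \<in> sets (hist_space SX SY t)" using Fm by measurable
  have key: "emeasure (?N h) E = 1" if h: "h \<in> space (hist_space SX SY t)" and r: "0 \<le> r" "r \<le> 1"
      and eqX: "\<sigma>X t h = two_point SX r s1 s2" for h r
  proof -
    note ps = pair_sets[OF sX sY h]
    have um: "(\<lambda>a. h(t := a)) \<in> (\<sigma>X t h \<Otimes>\<^sub>M \<sigma>Y t h) \<rightarrow>\<^sub>M hist_space SX SY (Suc t)"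
      using upd_meas1[OF h] ps(1) by (simp cong: measurable_cong_sets)
    let ?C = "(\<lambda>a. h(t := a)) -` E \<inter> space (SX \<Otimes>\<^sub>M SY)"
    have C: "?C \<in> sets (SX \<Otimes>\<^sub>M SY)" using measurable_sets[OF upd_meas1[OF h] E(1)] .
    have Csup: "{s1, s2} \<times> space SY \<subseteq> ?C"
    proof
      fix a assume a: "a \<in> {s1, s2} \<times> space SY"
      then have asp: "a \<in> space (SX \<Otimes>\<^sub>M SY)" using s by (auto simp: space_pair_measure)
      have "h(t := a) \<in> space (hist_space SX SY (Suc t))"
        using measurable_space[OF upd_meas1[OF h] asp] .
      moreover have "fst ((h(t := a)) t) \<in> {s1, s2}" using a by auto
      ultimately show "a \<in> ?C" using E(2) asp by auto
    qed
    have "emeasure (?N h) E = emeasure (\<sigma>X t h \<Otimes>\<^sub>M \<sigma>Y t h) ((\<lambda>a. h(t := a)) -` E \<inter> space (\<sigma>X t h \<Otimes>\<^sub>M \<sigma>Y t h))"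
      by (rule emeasure_distr[OF um E(1)])
    also have "\<dots> = emeasure (two_point SX r s1 s2 \<Otimes>\<^sub>M \<sigma>Y t h) ?C"
      using ps(2) eqX by simp
    also have "\<dots> = 1" by (rule pair_full[OF r s ps(4) ps(6) C Csup])
    finally show "emeasure (?N h) E = 1" .
  qed
  have sub: "{h\<in>space (hist_space SX SY t). \<exists>r. 0 \<le> r \<and> r \<le> 1 \<and> \<sigma>X t h = two_point SX r s1 s2} \<subseteq> ?G"
    using key by blast
  have "emeasure ?H ?G = 1" using TP G sub by blast
  then have ae: "AE h in ?H. h \<in> ?G" using HS G by (intro prob1_AE) auto
  have "(\<integral>\<^sup>+h. emeasure (?N h) E \<partial>?H) = (\<integral>\<^sup>+h. 1 \<partial>?H)"
    by (rule nn_integral_cong_AE) (use ae in auto)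
  also have "\<dots> = 1" using prob_space.emeasure_space_1[OF HS(3)] by simp
  finally show ?thesis using eq1 by simp
qed

lemma round_AE:
  assumes sX: "behavioral_strategy SX SY SX \<sigma>X" and sY: "behavioral_strategy SX SY SY \<sigma>Y"
    and P: "\<forall>E\<in>sets (hist_space SX SY (Suc t)). {h\<in>space (hist_space SX SY (Suc t)). fst (h t) \<in> {s1, s2}} \<subseteq> E
               \<longrightarrow> emeasure (hist_dist SX SY \<sigma>X \<sigma>Y (Suc t)) E = 1"
    and Z: "Z \<in> sets (SX \<Otimes>\<^sub>M SY)" "{s1, s2} \<times> space SY \<subseteq> Z"
  shows "AE z in round_dist SX SY \<sigma>X \<sigma>Y t. z \<in> Z"
proof -
  have proj: "(\<lambda>h. h t) \<in> hist_space SX SY (Suc t) \<rightarrow>\<^sub>M SX \<Otimes>\<^sub>M SY"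
    unfolding hist_space_def by (rule measurable_component_singleton) simp
  note HS = hist_sets[OF sX sY, of "Suc t"]
  have proj': "(\<lambda>h. h t) \<in> hist_dist SX SY \<sigma>X \<sigma>Y (Suc t) \<rightarrow>\<^sub>M SX \<Otimes>\<^sub>M SY"
    using proj HS(1) by (simp cong: measurable_cong_sets)
  let ?E = "(\<lambda>h. h t) -` Z \<inter> space (hist_space SX SY (Suc t))"
  have E: "?E \<in> sets (hist_space SX SY (Suc t))" using measurable_sets[OF proj Z(1)] .
  have Esup: "{h\<in>space (hist_space SX SY (Suc t)). fst (h t) \<in> {s1, s2}} \<subseteq> ?E"
  proof (rule subsetI)
    fix h assume "h \<in> {h\<in>space (hist_space SX SY (Suc t)). fst (h t) \<in> {s1, s2}}"
    then have h: "h \<in> space (hist_space SX SY (Suc t))" "fst (h t) \<in> {s1, s2}" by auto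
    have "h t \<in> space (SX \<Otimes>\<^sub>M SY)" using measurable_space[OF proj h(1)] .
    then have "h t \<in> Z" using h(2) Z(2) by (cases "h t") (auto simp: space_pair_measure)
    then show "h \<in> ?E" using h(1) by simp
  qed
  have "emeasure (round_dist SX SY \<sigma>X \<sigma>Y t) Z = emeasure (hist_dist SX SY \<sigma>X \<sigma>Y (Suc t)) ((\<lambda>h. h t) -` Z \<inter> space (hist_dist SX SY \<sigma>X \<sigma>Y (Suc t)))"
    unfolding round_dist_def by (rule emeasure_distr[OF proj' Z(1)])
  also have "\<dots> = 1" using P E Esup HS(2) by simp
  finally have "emeasure (round_dist SX SY \<sigma>X \<sigma>Y t) Z = 1" .
  moreover note RP = round_prob[OF sX sY, of t]
  ultimately show ?thesis using Z(1) by (intro prob1_AE) (auto simp: space_prob_algebra)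
qed

lemma summable_geo_bounded:
  fixes g :: "nat \<Rightarrow> real"
  assumes "0 < lam" "lam < 1" "\<And>t. \<bar>g t\<bar> \<le> B"
  shows "summable (\<lambda>t. lam ^ t * g t)"
proof (rule summable_comparison_test[of _ "\<lambda>t. B * lam ^ t"])
  show "\<exists>N. \<forall>n\<ge>N. norm (lam ^ n * g n) \<le> B * lam ^ n"
    using assms by (auto simp: abs_mult mult.commute intro!: mult_right_mono)
  show "summable (\<lambda>t. B * lam ^ t)" using assms by (intro summable_mult summable_geometric) auto
qed

lemma series_part:
  fixes Ex Ey q :: "nat \<Rightarrow> real"
  assumes lam: "0 < lam" "lam < 1" and phi: "\<phi> > 0"
    and bX: "\<And>t. \<bar>Ex t\<bar> \<le> BX" and bY: "\<And>t. \<bar>Ey t\<bar> \<le> BY"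
    and q: "\<And>t. \<bar>q t\<bar> \<le> 1" and q0: "q 0 = p0"
    and rec: "\<And>t. \<phi> * (\<alpha> * Ex t + \<beta> * Ey t + \<gamma>) = lam * q (Suc t) - q t + (1 - lam) * p0"
  shows "\<alpha> * ((1 - lam) * (\<Sum>t. lam ^ t * Ex t)) + \<beta> * ((1 - lam) * (\<Sum>t. lam ^ t * Ey t)) + \<gamma> = 0"
proof -
  have sX: "summable (\<lambda>t. lam ^ t * Ex t)" by (rule summable_geo_bounded[OF lam bX])
  have sY: "summable (\<lambda>t. lam ^ t * Ey t)" by (rule summable_geo_bounded[OF lam bY])
  have sq: "summable (\<lambda>t. lam ^ t * q t)" by (rule summable_geo_bounded[OF lam q])
  have sg: "summable (\<lambda>t. lam ^ t)" using lam by (intro summable_geometric) auto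
  have geo: "(\<Sum>t. lam ^ t) = 1 / (1 - lam)" using lam by (intro suminf_geometric) auto
  have sqS: "summable (\<lambda>t. lam ^ Suc t * q (Suc t))"
    using sq by (subst summable_Suc_iff)
  have headq: "(\<Sum>t. lam ^ Suc t * q (Suc t)) = (\<Sum>t. lam ^ t * q t) - q 0"
    using suminf_split_head[OF sq] by simp
  have "(\<lambda>t. \<phi> * (lam ^ t * (\<alpha> * Ex t + \<beta> * Ey t + \<gamma>)))
      = (\<lambda>t. lam ^ Suc t * q (Suc t) - lam ^ t * q t + ((1 - lam) * p0) * lam ^ t)"
  proof (rule ext)
    fix t
    have "\<phi> * (lam ^ t * (\<alpha> * Ex t + \<beta> * Ey t + \<gamma>)) = lam ^ t * (\<phi> * (\<alpha> * Ex t + \<beta> * Ey t + \<gamma>))"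
      by simp
    also have "\<dots> = lam ^ t * (lam * q (Suc t) - q t + (1 - lam) * p0)" by (simp only: rec)
    finally show "\<phi> * (lam ^ t * (\<alpha> * Ex t + \<beta> * Ey t + \<gamma>)) = lam ^ Suc t * q (Suc t) - lam ^ t * q t + ((1 - lam) * p0) * lam ^ t"
      by (simp add: algebra_simps)
  qed
  then have "(\<Sum>t. \<phi> * (lam ^ t * (\<alpha> * Ex t + \<beta> * Ey t + \<gamma>)))
      = (\<Sum>t. lam ^ Suc t * q (Suc t)) - (\<Sum>t. lam ^ t * q t) + ((1 - lam) * p0) * (\<Sum>t. lam ^ t)"
    using sqS sq sg by (simp add: suminf_add[symmetric] suminf_diff[symmetric] suminf_mult summable_mult summable_diff)
  also have "\<dots> = (\<Sum>t. lam ^ t * q t) - q 0 - (\<Sum>t. lam ^ t * q t) + ((1 - lam) * p0) * (1 / (1 - lam))"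
    by (simp only: headq geo)
  also have "\<dots> = 0" using q0 lam by simp
  finally have z: "(\<Sum>t. \<phi> * (lam ^ t * (\<alpha> * Ex t + \<beta> * Ey t + \<gamma>))) = 0" .
  have "(\<lambda>t. \<phi> * (lam ^ t * (\<alpha> * Ex t + \<beta> * Ey t + \<gamma>)))
      = (\<lambda>t. (\<phi> * \<alpha>) * (lam ^ t * Ex t) + (\<phi> * \<beta>) * (lam ^ t * Ey t) + (\<phi> * \<gamma>) * lam ^ t)"
    by (rule ext) (simp add: algebra_simps)
  then have "(\<Sum>t. \<phi> * (lam ^ t * (\<alpha> * Ex t + \<beta> * Ey t + \<gamma>)))
      = (\<phi> * \<alpha>) * (\<Sum>t. lam ^ t * Ex t) + (\<phi> * \<beta>) * (\<Sum>t. lam ^ t * Ey t) + (\<phi> * \<gamma>) * (\<Sum>t. lam ^ t)"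
    using sX sY sg by (simp add: suminf_add[symmetric] suminf_mult summable_mult summable_add)
  with z geo have "\<phi> * (\<alpha> * (\<Sum>t. lam ^ t * Ex t) + \<beta> * (\<Sum>t. lam ^ t * Ey t) + \<gamma> / (1 - lam)) = 0"
    by (simp add: algebra_simps)
  then have "\<alpha> * (\<Sum>t. lam ^ t * Ex t) + \<beta> * (\<Sum>t. lam ^ t * Ey t) + \<gamma> / (1 - lam) = 0"
    using phi by simp
  then have "(1 - lam) * (\<alpha> * (\<Sum>t. lam ^ t * Ex t) + \<beta> * (\<Sum>t. lam ^ t * Ey t)) + (1 - lam) * (\<gamma> / (1 - lam)) = 0"
    by (simp only: distrib_left[symmetric])
  moreover have "(1 - lam) * (\<gamma> / (1 - lam)) = \<gamma>" using lam by simp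
  ultimately show ?thesis by (simp add: algebra_simps)
qed

lemma round_rect_r:
  assumes sX: "behavioral_strategy SX SY SX \<sigma>X" and sY: "behavioral_strategy SX SY SY \<sigma>Y"
    and B: "B \<in> sets SX"
  shows "measure (round_dist SX SY \<sigma>X \<sigma>Y t) (B \<times> space SY)
     = (\<integral>h. measure (\<sigma>X t h) B \<partial>hist_dist SX SY \<sigma>X \<sigma>Y t)"
proof -
  note HS = hist_sets[OF sX sY, of t]
  interpret H: prob_space "hist_dist SX SY \<sigma>X \<sigma>Y t" by (rule HS(3))
  have m0: "(\<lambda>h. measure (\<sigma>X t h) B) \<in> borel_measurable (hist_space SX SY t)"
    using measurable_compose[OF sX[unfolded behavioral_strategy_def, rule_format, of t] measurable_measure_prob_algebra[OF B]] .
  have m: "(\<lambda>h. measure (\<sigma>X t h) B) \<in> borel_measurable (hist_dist SX SY \<sigma>X \<sigma>Y t)"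
    using m0 HS(1) by (simp cong: measurable_cong_sets)
  have int: "integrable (hist_dist SX SY \<sigma>X \<sigma>Y t) (\<lambda>h. measure (\<sigma>X t h) B)"
  proof (rule H.integrable_const_bound[where B=1])
    show "AE x in hist_dist SX SY \<sigma>X \<sigma>Y t. norm (measure (\<sigma>X t x) B) \<le> 1"
    proof (rule AE_I2)
      fix h assume "h \<in> space (hist_dist SX SY \<sigma>X \<sigma>Y t)"
      then have h: "h \<in> space (hist_space SX SY t)" using HS(2) by simp
      interpret P: prob_space "\<sigma>X t h" using pair_sets[OF sX sY h] by simp
      show "norm (measure (\<sigma>X t h) B) \<le> 1" by simp
    qed
  qed (rule m)
  have "emeasure (round_dist SX SY \<sigma>X \<sigma>Y t) (B \<times> space SY)
      = (\<integral>\<^sup>+h. ennreal (measure (\<sigma>X t h) B) \<partial>hist_dist SX SY \<sigma>X \<sigma>Y t)"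
    unfolding round_rect_e[OF sX sY B]
  proof (rule nn_integral_cong)
    fix h assume "h \<in> space (hist_dist SX SY \<sigma>X \<sigma>Y t)"
    then have h: "h \<in> space (hist_space SX SY t)" using HS(2) by simp
    interpret P: prob_space "\<sigma>X t h" using pair_sets[OF sX sY h] by simp
    show "emeasure (\<sigma>X t h) B = ennreal (measure (\<sigma>X t h) B)" by (rule P.emeasure_eq_measure)
  qed
  also have "\<dots> = ennreal (\<integral>h. measure (\<sigma>X t h) B \<partial>hist_dist SX SY \<sigma>X \<sigma>Y t)"
    by (rule nn_integral_eq_integral[OF int]) simp
  finally have e: "emeasure (round_dist SX SY \<sigma>X \<sigma>Y t) (B \<times> space SY)
      = ennreal (\<integral>h. measure (\<sigma>X t h) B \<partial>hist_dist SX SY \<sigma>X \<sigma>Y t)" .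
  have nn: "0 \<le> (\<integral>h. measure (\<sigma>X t h) B \<partial>hist_dist SX SY \<sigma>X \<sigma>Y t)" by simp
  show ?thesis unfolding measure_def e using nn by simp
qed

theorem corollary1:
  fixes SX :: "'x measure" and SY :: "'y measure"
    and uX uY :: "'x \<Rightarrow> 'y \<Rightarrow> real"
    and lam \<alpha> \<beta> \<gamma> p0 \<phi> :: real and s1 s2 :: 'x
    and K :: "'x \<times> 'y \<Rightarrow> 'x measure"
    and \<sigma>Y :: "nat \<Rightarrow> (nat \<Rightarrow> 'x \<times> 'y) \<Rightarrow> 'y measure"
  defines "f \<equiv> (\<lambda>s y. \<alpha> * uX s y + \<beta> * uY s y + \<gamma>)"
  assumes uX: "bounded_measurable_payoff SX SY uX"
    and uY: "bounded_measurable_payoff SX SY uY"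
    and lam: "0 < lam" "lam < 1"
    and s: "s1 \<in> space SX" "s2 \<in> space SX"
    and p0: "0 \<le> p0" "p0 \<le> 1"
    and phi: "\<phi> > 0"
    and f1: "\<forall>y\<in>space SY. - (1 - (1 - lam) * p0) / \<phi> \<le> f s1 y \<and> f s1 y \<le> - ((1 - lam) * (1 - p0)) / \<phi>"
    and f2: "\<forall>y\<in>space SY. (1 - lam) * p0 / \<phi> \<le> f s2 y \<and> f s2 y \<le> (lam + (1 - lam) * p0) / \<phi>"
    and K_kernel: "K \<in> SX \<Otimes>\<^sub>M SY \<rightarrow>\<^sub>M prob_algebra SX"
    and K1: "\<forall>y\<in>space SY. K (s1, y) = two_point SX ((\<phi> * f s1 y - (1 - lam) * p0 + 1) / lam) s1 s2"
    and K2: "\<forall>y\<in>space SY. K (s2, y) = two_point SX ((\<phi> * f s2 y - (1 - lam) * p0) / lam) s1 s2"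
    and \<sigma>Y: "behavioral_strategy SX SY SY \<sigma>Y"
  shows "\<alpha> * expected_payoff SX SY (memory_one (two_point SX p0 s1 s2) K) \<sigma>Y lam uX
       + \<beta> * expected_payoff SX SY (memory_one (two_point SX p0 s1 s2) K) \<sigma>Y lam uY + \<gamma> = 0"
proof -
  define \<sigma>X where "\<sigma>X = memory_one (two_point SX p0 s1 s2) K"
  let ?H = "hist_dist SX SY \<sigma>X \<sigma>Y"
  let ?R = "round_dist SX SY \<sigma>X \<sigma>Y"
  have "(\<lambda>_. undefined) \<in> space (hist_space SX SY 0)" by (simp add: hist_space_def space_PiM)
  from strat_space[OF \<sigma>Y this] have "prob_space (\<sigma>Y 0 (\<lambda>_. undefined))" "sets (\<sigma>Y 0 (\<lambda>_. undefined)) = sets SY"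
    by (auto simp: space_prob_algebra)
  then have "space SY \<noteq> {}"
    using prob_space.not_empty sets_eq_imp_space_eq by metis
  then obtain y0 where y0: "y0 \<in> space SY" by blast
  have lt: "f s1 y0 < f s2 y0"
  proof -
    have "f s1 y0 \<le> - ((1 - lam) * (1 - p0)) / \<phi>" "(1 - lam) * p0 / \<phi> \<le> f s2 y0"
      using f1 f2 y0 by auto
    moreover have "- ((1 - lam) * (1 - p0)) / \<phi> < (1 - lam) * p0 / \<phi>"
      using lam phi by (simp add: divide_strict_right_mono field_simps)
    ultimately show ?thesis by linarith
  qed
  have [measurable]: "case_prod uX \<in> borel_measurable (SX \<Otimes>\<^sub>M SY)" "case_prod uY \<in> borel_measurable (SX \<Otimes>\<^sub>M SY)"
    using uX uY by (auto simp: bounded_measurable_payoff_def)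
  obtain BX where BX: "\<forall>x\<in>space SX. \<forall>y\<in>space SY. \<bar>uX x y\<bar> \<le> BX"
    using uX by (auto simp: bounded_measurable_payoff_def)
  obtain BY where BY: "\<forall>x\<in>space SX. \<forall>y\<in>space SY. \<bar>uY x y\<bar> \<le> BY"
    using uY by (auto simp: bounded_measurable_payoff_def)
  have fm: "(\<lambda>x. f x y0) \<in> borel_measurable SX"
  proof -
    have "(\<lambda>x. (x, y0)) \<in> SX \<rightarrow>\<^sub>M SX \<Otimes>\<^sub>M SY" using y0 by (rule measurable_Pair2')
    note c = measurable_compose[OF this]
    have "(\<lambda>x. case_prod uX (x, y0)) \<in> borel_measurable SX" "(\<lambda>x. case_prod uY (x, y0)) \<in> borel_measurable SX"
      by (rule c, simp)+
    then have "(\<lambda>x. uX x y0) \<in> borel_measurable SX" "(\<lambda>x. uY x y0) \<in> borel_measurable SX" by simp_all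
    then show ?thesis unfolding f_def by measurable
  qed
  define A where "A = {x \<in> space SX. f x y0 \<le> f s1 y0}"
  have A: "A \<in> sets SX" unfolding A_def using fm by measurable
  have sA: "s1 \<in> A" "s2 \<notin> A" using s lt by (auto simp: A_def)
  have tp0: "two_point SX p0 s1 s2 \<in> space (prob_algebra SX)" by (rule two_point_prob[OF p0 s])
  have sX: "behavioral_strategy SX SY SX \<sigma>X"
    unfolding behavioral_strategy_def
  proof
    fix T show "\<sigma>X T \<in> hist_space SX SY T \<rightarrow>\<^sub>M prob_algebra SX"
    proof (cases T)
      case 0
      then show ?thesis unfolding \<sigma>X_def memory_one_def using tp0 by simp
    next
      case (Suc n)
      have "(\<lambda>h. h n) \<in> hist_space SX SY T \<rightarrow>\<^sub>M SX \<Otimes>\<^sub>M SY"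
        unfolding hist_space_def by (rule measurable_component_singleton) (simp add: Suc)
      from measurable_compose[OF this K_kernel] show ?thesis
        unfolding \<sigma>X_def memory_one_def using Suc by simp
    qed
  qed
  define pz where "pz = (\<lambda>x y. (\<phi> * f x y - (1 - lam) * p0 + indicator A x) / lam)"
  have Kp: "0 \<le> pz x y \<and> pz x y \<le> 1 \<and> K (x, y) = two_point SX (pz x y) s1 s2"
    if x: "x \<in> {s1, s2}" and y: "y \<in> space SY" for x y
  proof (cases "x = s1")
    case True
    have b: "- (1 - (1 - lam) * p0) / \<phi> \<le> f s1 y" "f s1 y \<le> - ((1 - lam) * (1 - p0)) / \<phi>"
      using f1 y by auto
    then have "- (1 - (1 - lam) * p0) \<le> \<phi> * f s1 y" "\<phi> * f s1 y \<le> - ((1 - lam) * (1 - p0))"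
      using phi by (auto simp: field_simps)
    then have "0 \<le> pz s1 y" "pz s1 y \<le> 1" using lam sA unfolding pz_def by (auto simp: field_simps)
    moreover have "K (s1, y) = two_point SX (pz s1 y) s1 s2" using K1 y sA unfolding pz_def by simp
    ultimately show ?thesis using True by simp
  next
    case False
    then have xs: "x = s2" using x by simp
    have b: "(1 - lam) * p0 / \<phi> \<le> f s2 y" "f s2 y \<le> (lam + (1 - lam) * p0) / \<phi>"
      using f2 y by auto
    then have "(1 - lam) * p0 \<le> \<phi> * f s2 y" "\<phi> * f s2 y \<le> lam + (1 - lam) * p0"
      using phi by (auto simp: field_simps)
    then have "0 \<le> pz s2 y" "pz s2 y \<le> 1" using lam sA unfolding pz_def by (auto simp: field_simps)
    moreover have "K (s2, y) = two_point SX (pz s2 y) s1 s2" using K2 y sA unfolding pz_def by simp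
    ultimately show ?thesis using xs by simp
  qed
  have TP: "\<forall>G\<in>sets (hist_space SX SY t). {h\<in>space (hist_space SX SY t). \<exists>r. 0 \<le> r \<and> r \<le> 1 \<and> \<sigma>X t h = two_point SX r s1 s2} \<subseteq> G
               \<longrightarrow> emeasure (?H t) G = 1" for t
  proof (induction t)
    case 0
    show ?case
    proof (intro ballI impI)
      fix G assume G: "G \<in> sets (hist_space SX SY 0)"
        "{h\<in>space (hist_space SX SY 0). \<exists>r. 0 \<le> r \<and> r \<le> 1 \<and> \<sigma>X 0 h = two_point SX r s1 s2} \<subseteq> G"
      have "space (hist_space SX SY 0) \<subseteq> G" using G(2) p0 by (auto simp: \<sigma>X_def memory_one_def)
      then have "G = space (hist_space SX SY 0)" using sets.sets_into_space[OF G(1)] by auto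
      then show "emeasure (?H 0) G = 1"
        using prob_space.emeasure_space_1[OF hist_sets(3)[OF sX \<sigma>Y, of 0]] hist_sets(2)[OF sX \<sigma>Y, of 0] by simp
    qed
  next
    case (Suc t)
    show ?case
    proof (intro ballI impI)
      fix G assume G: "G \<in> sets (hist_space SX SY (Suc t))"
        "{h\<in>space (hist_space SX SY (Suc t)). \<exists>r. 0 \<le> r \<and> r \<le> 1 \<and> \<sigma>X (Suc t) h = two_point SX r s1 s2} \<subseteq> G"
      have "{h\<in>space (hist_space SX SY (Suc t)). fst (h t) \<in> {s1, s2}} \<subseteq> G"
      proof (rule subsetI)
        fix h assume "h \<in> {h\<in>space (hist_space SX SY (Suc t)). fst (h t) \<in> {s1, s2}}"
        then have h: "h \<in> space (hist_space SX SY (Suc t))" "fst (h t) \<in> {s1, s2}" by auto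
        have "h t \<in> space (SX \<Otimes>\<^sub>M SY)" using h(1) by (auto simp: hist_space_def space_PiM)
        then have "snd (h t) \<in> space SY" by (auto simp: space_pair_measure)
        from Kp[OF h(2) this] have "\<exists>r. 0 \<le> r \<and> r \<le> 1 \<and> \<sigma>X (Suc t) h = two_point SX r s1 s2"
          by (auto simp: \<sigma>X_def memory_one_def)
        then show "h \<in> G" using G(2) h(1) by blast
      qed
      then show "emeasure (?H (Suc t)) G = 1"
        by (rule TP_P'[OF sX \<sigma>Y s Suc G(1)])
    qed
  qed
  have P': "\<forall>E\<in>sets (hist_space SX SY (Suc t)). {h\<in>space (hist_space SX SY (Suc t)). fst (h t) \<in> {s1, s2}} \<subseteq> E
               \<longrightarrow> emeasure (?H (Suc t)) E = 1" for t
    using TP_P'[OF sX \<sigma>Y s TP[of t]] by blast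
  have uXm: "(\<lambda>z. uX (fst z) (snd z)) \<in> borel_measurable (SX \<Otimes>\<^sub>M SY)"
    using \<open>case_prod uX \<in> borel_measurable (SX \<Otimes>\<^sub>M SY)\<close> by (simp add: case_prod_beta')
  have uYm: "(\<lambda>z. uY (fst z) (snd z)) \<in> borel_measurable (SX \<Otimes>\<^sub>M SY)"
    using \<open>case_prod uY \<in> borel_measurable (SX \<Otimes>\<^sub>M SY)\<close> by (simp add: case_prod_beta')
  have RS: "sets (?R t) = sets (SX \<Otimes>\<^sub>M SY)" "prob_space (?R t)" for t
    using round_prob[OF sX \<sigma>Y, of t] by (auto simp: space_prob_algebra)
  have RSp: "space (?R t) = space (SX \<Otimes>\<^sub>M SY)" for t using RS(1) by (rule sets_eq_imp_space_eq)
  have bint: "integrable (?R t) g"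
    if gm: "g \<in> borel_measurable (SX \<Otimes>\<^sub>M SY)" and gb: "\<And>z. z \<in> space (SX \<Otimes>\<^sub>M SY) \<Longrightarrow> \<bar>g z\<bar> \<le> B"
    for t and g :: "_ \<Rightarrow> real" and B
  proof -
    interpret P: prob_space "?R t" by (rule RS(2))
    show ?thesis
    proof (rule P.integrable_const_bound[where B=B])
      show "AE x in ?R t. norm (g x) \<le> B" by (rule AE_I2) (use gb RSp in auto)
      show "g \<in> borel_measurable (?R t)" using gm RS(1) by (simp cong: measurable_cong_sets)
    qed
  qed
  have intX: "integrable (?R t) (\<lambda>z. uX (fst z) (snd z))" for t
    by (rule bint[OF uXm, of BX]) (use BX in \<open>auto simp: space_pair_measure\<close>)
  have intY: "integrable (?R t) (\<lambda>z. uY (fst z) (snd z))" for t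
    by (rule bint[OF uYm, of BY]) (use BY in \<open>auto simp: space_pair_measure\<close>)
  define Ex where "Ex t = (\<integral>z. case_prod uX z \<partial>?R t)" for t
  define Ey where "Ey t = (\<integral>z. case_prod uY z \<partial>?R t)" for t
  define q where "q t = measure (?R t) (A \<times> space SY)" for t
  have bX: "\<bar>Ex t\<bar> \<le> BX" for t
  proof -
    interpret P: prob_space "?R t" by (rule RS(2))
    have "\<bar>Ex t\<bar> \<le> (\<integral>z. \<bar>uX (fst z) (snd z)\<bar> \<partial>?R t)" unfolding Ex_def case_prod_beta'
      by (rule integral_abs_bound)
    also have "\<dots> \<le> (\<integral>z. BX \<partial>?R t)"
      by (rule integral_mono[OF integrable_abs[OF intX]]) (use BX RSp in \<open>auto simp: space_pair_measure\<close>)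
    finally have "\<bar>Ex t\<bar> \<le> (\<integral>z. BX \<partial>?R t)" .
    then show ?thesis by (simp add: P.prob_space)
  qed
  have bY: "\<bar>Ey t\<bar> \<le> BY" for t
  proof -
    interpret P: prob_space "?R t" by (rule RS(2))
    have "\<bar>Ey t\<bar> \<le> (\<integral>z. \<bar>uY (fst z) (snd z)\<bar> \<partial>?R t)" unfolding Ey_def case_prod_beta'
      by (rule integral_abs_bound)
    also have "\<dots> \<le> (\<integral>z. BY \<partial>?R t)"
      by (rule integral_mono[OF integrable_abs[OF intY]]) (use BY RSp in \<open>auto simp: space_pair_measure\<close>)
    finally have "\<bar>Ey t\<bar> \<le> (\<integral>z. BY \<partial>?R t)" .
    then show ?thesis by (simp add: P.prob_space)
  qed
  have bq: "\<bar>q t\<bar> \<le> 1" for t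
  proof -
    interpret P: prob_space "?R t" by (rule RS(2))
    show ?thesis unfolding q_def by simp
  qed
  have q0: "q 0 = p0"
  proof -
    note HS = hist_sets[OF sX \<sigma>Y, of 0]
    interpret P: prob_space "?H 0" by (rule HS(3))
    have "q 0 = (\<integral>h. measure (\<sigma>X 0 h) A \<partial>?H 0)" unfolding q_def by (rule round_rect_r[OF sX \<sigma>Y A])
    also have "\<dots> = (\<integral>h. p0 \<partial>?H 0)"
      using two_point_measure[OF p0 A, of s1 s2] sA by (simp add: \<sigma>X_def memory_one_def)
    also have "\<dots> = p0" by (simp add: P.prob_space del: hist_dist.simps)
    finally show ?thesis .
  qed
  have Qm: "(\<lambda>z. measure (K z) A) \<in> borel_measurable (SX \<Otimes>\<^sub>M SY)"
    using measurable_compose[OF K_kernel measurable_measure_prob_algebra[OF A]] .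
  have pzm: "(\<lambda>z. pz (fst z) (snd z)) \<in> borel_measurable (SX \<Otimes>\<^sub>M SY)"
    unfolding pz_def f_def using uXm uYm A by measurable
  have qS: "q (Suc t) = (\<integral>z. measure (K z) A \<partial>?R t)" for t
  proof -
    have proj: "(\<lambda>h. h t) \<in> hist_space SX SY (Suc t) \<rightarrow>\<^sub>M SX \<Otimes>\<^sub>M SY"
      unfolding hist_space_def by (rule measurable_component_singleton) simp
    note HS = hist_sets[OF sX \<sigma>Y, of "Suc t"]
    have proj': "(\<lambda>h. h t) \<in> ?H (Suc t) \<rightarrow>\<^sub>M SX \<Otimes>\<^sub>M SY"
      using proj HS(1) by (simp cong: measurable_cong_sets)
    have "q (Suc t) = (\<integral>h. measure (\<sigma>X (Suc t) h) A \<partial>?H (Suc t))"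
      unfolding q_def by (rule round_rect_r[OF sX \<sigma>Y A])
    also have "\<dots> = (\<integral>h. measure (K (h t)) A \<partial>?H (Suc t))"
      by (simp add: \<sigma>X_def memory_one_def del: hist_dist.simps)
    also have "\<dots> = (\<integral>z. measure (K z) A \<partial>?R t)"
      unfolding round_dist_def by (rule integral_distr[OF proj' Qm, symmetric])
    finally show ?thesis .
  qed
  have Qp: "(\<integral>z. measure (K z) A \<partial>?R t) = (\<integral>z. pz (fst z) (snd z) \<partial>?R t)" for t
  proof (rule integral_cong_AE)
    show "(\<lambda>z. measure (K z) A) \<in> borel_measurable (?R t)" using Qm RS(1) by (simp cong: measurable_cong_sets)
    show "(\<lambda>z. pz (fst z) (snd z)) \<in> borel_measurable (?R t)" using pzm RS(1) by (simp cong: measurable_cong_sets)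
    let ?Z = "{z \<in> space (SX \<Otimes>\<^sub>M SY). measure (K z) A = pz (fst z) (snd z)}"
    have Z: "?Z \<in> sets (SX \<Otimes>\<^sub>M SY)" using Qm pzm by measurable
    have Zsup: "{s1, s2} \<times> space SY \<subseteq> ?Z"
    proof (rule subsetI)
      fix z assume "z \<in> {s1, s2} \<times> space SY"
      then obtain x y where z: "z = (x, y)" and x: "x \<in> {s1, s2}" and y: "y \<in> space SY" by blast
      have sp: "(x, y) \<in> space (SX \<Otimes>\<^sub>M SY)" using s x y by (auto simp: space_pair_measure)
      from Kp[OF x y] have "measure (K (x, y)) A = pz x y * indicator A s1 + (1 - pz x y) * indicator A s2"
        using two_point_measure[OF _ _ A] by simp
      then have "measure (K (x, y)) A = pz x y" using sA by simp
      then show "z \<in> ?Z" using sp z by simp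
    qed
    have "AE z in ?R t. z \<in> ?Z" by (rule round_AE[OF sX \<sigma>Y P' Z Zsup])
    then show "AE z in ?R t. measure (K z) A = pz (fst z) (snd z)" by auto
  qed
  have pzint: "lam * (\<integral>z. pz (fst z) (snd z) \<partial>?R t) = \<phi> * (\<alpha> * Ex t + \<beta> * Ey t + \<gamma>) - (1 - lam) * p0 + q t" for t
  proof -
    interpret P: prob_space "?R t" by (rule RS(2))
    have iI: "integrable (?R t) (indicator (A \<times> space SY) :: _ \<Rightarrow> real)"
      by (rule integrable_real_indicator) (use A in \<open>simp_all add: RS(1) P.emeasure_eq_measure\<close>)
    have "lam * (\<integral>z. pz (fst z) (snd z) \<partial>?R t) = (\<integral>z. lam * pz (fst z) (snd z) \<partial>?R t)" by simp
    also have "\<dots> = (\<integral>z. \<phi> * \<alpha> * uX (fst z) (snd z) + \<phi> * \<beta> * uY (fst z) (snd z) + (\<phi> * \<gamma> - (1 - lam) * p0) + indicator (A \<times> space SY) z \<partial>?R t)"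
    proof (rule Bochner_Integration.integral_cong[OF refl])
      fix z assume "z \<in> space (?R t)"
      then have "snd z \<in> space SY" by (auto simp: RSp space_pair_measure)
      then have "indicator A (fst z) = (indicator (A \<times> space SY) z :: real)"
        by (cases z) (auto simp: indicator_def)
      then show "lam * pz (fst z) (snd z) = \<phi> * \<alpha> * uX (fst z) (snd z) + \<phi> * \<beta> * uY (fst z) (snd z) + (\<phi> * \<gamma> - (1 - lam) * p0) + indicator (A \<times> space SY) z"
      proof -
        have "lam * pz (fst z) (snd z) = \<phi> * f (fst z) (snd z) - (1 - lam) * p0 + indicator A (fst z)"
          using lam unfolding pz_def by simp
        then show ?thesis using \<open>indicator A (fst z) = (indicator (A \<times> space SY) z :: real)\<close>
          unfolding f_def by (simp add: algebra_simps)
      qed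
    qed
    also have "\<dots> = \<phi> * \<alpha> * Ex t + \<phi> * \<beta> * Ey t + (\<phi> * \<gamma> - (1 - lam) * p0) + q t"
    proof -
      have iA: "integrable (?R t) (\<lambda>z. \<phi> * \<alpha> * uX (fst z) (snd z))" using intX by simp
      have iB: "integrable (?R t) (\<lambda>z. \<phi> * \<beta> * uY (fst z) (snd z))" using intY by simp
      have "(\<integral>z. \<phi> * \<alpha> * uX (fst z) (snd z) + \<phi> * \<beta> * uY (fst z) (snd z) + (\<phi> * \<gamma> - (1 - lam) * p0) + indicator (A \<times> space SY) z \<partial>?R t)
        = (\<integral>z. \<phi> * \<alpha> * uX (fst z) (snd z) \<partial>?R t) + (\<integral>z. \<phi> * \<beta> * uY (fst z) (snd z) \<partial>?R t)
          + (\<integral>z. (\<phi> * \<gamma> - (1 - lam) * p0) \<partial>?R t) + (\<integral>z. indicator (A \<times> space SY) z \<partial>?R t)"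
        using iA iB iI by (simp add: Bochner_Integration.integral_add)
      also have "\<dots> = \<phi> * \<alpha> * Ex t + \<phi> * \<beta> * Ey t + (\<phi> * \<gamma> - (1 - lam) * p0) + q t"
      proof -
        have "(A \<times> space SY) \<inter> space (?R t) = A \<times> space SY"
          using sets.sets_into_space[OF A] by (auto simp: RSp space_pair_measure)
        then show ?thesis unfolding Ex_def Ey_def q_def case_prod_beta' by (simp add: P.prob_space)
      qed
      finally show ?thesis .
    qed
    finally show ?thesis by (simp add: algebra_simps)
  qed
  have rec: "\<phi> * (\<alpha> * Ex t + \<beta> * Ey t + \<gamma>) = lam * q (Suc t) - q t + (1 - lam) * p0" for t
    using pzint[of t] qS[of t] Qp[of t] by simp
  have fin: "\<alpha> * ((1 - lam) * (\<Sum>t. lam ^ t * Ex t)) + \<beta> * ((1 - lam) * (\<Sum>t. lam ^ t * Ey t)) + \<gamma> = 0"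
    by (rule series_part[OF lam phi bX bY bq q0 rec])
  then show ?thesis unfolding expected_payoff_def Ex_def Ey_def \<sigma>X_def .
qed

end
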